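(* Fix an even integer $k\ge2$ and variables $X_{i,j}$ for $i\in\{1,\ldots,k\}$, $j\in\{1,\ldots,k/2\}$. Let $$Q = R(X_{1,1},\ldots,X_{k,k/2}) \leftarrow \bigwedge_{j=1}^{k/2} R_j(X_{1,j},\ldots,X_{k,j}) \wedge \bigwedge_{i=1}^{k} T_i(X_{i,1},\ldots,X_{i,k/2}),$$ where the head contains all $k^2/2$ variables, with the functional dependencies: for each $j\in\{1,\ldots,k/2\}$, each subset $S\subseteq\{X_{1,j},\ldots,X_{k,j}\}$ with $|S|\ge k/2$, and each $i\in\{1,\ldots,k\}$, the dependency $S\to X_{i,j}$ (holding on relation $R_j$). Then $C(Q)\le 2$.
   Context: Valid coloring: a map $\mathcal{L}$ assigning to each query variable $X$ a finite set $\mathcal{L}(X)$ of colors such that for every functional dependency $Y_1,\ldots,Y_j\to Y$ among query variables, $\mathcal{L}(Y)\subseteq\bigcup_i\mathcal{L}(Y_i)$. Color number of a query with head list $u_0$ and body atoms with variable lists $u_1,\ldots,u_m$: $C(Q)=\max_{\mathcal{L}} \frac{|\bigcup_{X\in u_0}\mathcal{L}(X)|}{\max_{i\ge1}|\bigcup_{X\in u_i}\mathcal{L}(X)|}$, the maximum over valid colorings with positive denominator. *)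

theory Defs
  imports Complex_Main "HOL-Library.Extended_Real"
begin

text \<open>A conjunctive query is given by its head variable list, the variable lists of its
body atoms, and a set of functional dependencies (S, Y) meaning S \<rightarrow> Y.
Colors are natural numbers (any finite color sets can be renamed into nat).\<close>

definition valid_coloring ::
  "'v set \<Rightarrow> ('v set \<times> 'v) set \<Rightarrow> ('v \<Rightarrow> nat set) \<Rightarrow> bool" where
  "valid_coloring V fds L \<longleftrightarrow>
     (\<forall>X\<in>V. finite (L X)) \<and> (\<forall>(S, Y)\<in>fds. L Y \<subseteq> (\<Union>X\<in>S. L X))"

definition colors_of :: "('v \<Rightarrow> nat set) \<Rightarrow> 'v list \<Rightarrow> nat" where
  "colors_of L u = card (\<Union>X\<in>set u. L X)"

definition body_max :: "('v \<Rightarrow> nat set) \<Rightarrow> 'v list list \<Rightarrow> nat" where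
  "body_max L body = Max ((\<lambda>u. colors_of L u) ` set body)"

definition color_number ::
  "'v set \<Rightarrow> 'v list \<Rightarrow> 'v list list \<Rightarrow> ('v set \<times> 'v) set \<Rightarrow> ereal" where
  "color_number V head body fds =
     Sup {ereal (real (colors_of L head) / real (body_max L body)) | L.
            valid_coloring V fds L \<and> body_max L body > 0}"

definition qvars :: "nat \<Rightarrow> (nat \<times> nat) set" where
  "qvars k = {1..k} \<times> {1..k div 2}"

definition qhead :: "nat \<Rightarrow> (nat \<times> nat) list" where
  "qhead k = [(i, j). i \<leftarrow> [1..<k+1], j \<leftarrow> [1..<k div 2 + 1]]"

definition qbody :: "nat \<Rightarrow> (nat \<times> nat) list list" where
  "qbody k = [[(i, j). i \<leftarrow> [1..<k+1]]. j \<leftarrow> [1..<k div 2 + 1]]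
           @ [[(i, j). j \<leftarrow> [1..<k div 2 + 1]]. i \<leftarrow> [1..<k+1]]"

definition qfds :: "nat \<Rightarrow> ((nat \<times> nat) set \<times> (nat \<times> nat)) set" where
  "qfds k = {(S, (i, j)) | S i j. j \<in> {1..k div 2} \<and> i \<in> {1..k} \<and>
              S \<subseteq> {1..k} \<times> {j} \<and> card S \<ge> k div 2}"

end

theory Submission
  imports Defs
begin

lemma key_col:
  fixes k m :: nat and L :: "nat \<times> nat \<Rightarrow> nat set"
  assumes km: "k = 2*m" and val: "valid_coloring (qvars k) (qfds k) L"
    and i0: "i0 \<in> {1..k}" and j0: "j0 \<in> {1..m}" and c: "c \<in> L (i0, j0)"
  shows "m + 1 \<le> card {i\<in>{1..k}. c \<in> L (i, j0)}"
proof (rule ccontr)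
  assume "\<not> ?thesis"
  hence le: "card {i\<in>{1..k}. c \<in> L (i, j0)} \<le> m" by simp
  define N where "N = {i\<in>{1..k}. c \<notin> L (i, j0)}"
  have "{1..k} = {i\<in>{1..k}. c \<in> L (i, j0)} \<union> N" unfolding N_def by auto
  moreover have "{i\<in>{1..k}. c \<in> L (i, j0)} \<inter> N = {}" unfolding N_def by auto
  ultimately have "k = card {i\<in>{1..k}. c \<in> L (i, j0)} + card N"
    by (metis card_Un_disjoint card_atLeastAtMost diff_Suc_1 finite_Un finite_atLeastAtMost)
  hence cN: "card N \<ge> m" using le km by linarith
  define S where "S = (\<lambda>i. (i, j0)) ` N"
  have "card S = card N" unfolding S_def by (rule card_image) (auto simp: inj_on_def)
  hence cS: "card S \<ge> k div 2" using cN km by simp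
  have "S \<subseteq> {1..k} \<times> {j0}" unfolding S_def N_def by auto
  hence "(S, (i0, j0)) \<in> qfds k" unfolding qfds_def using cS i0 j0 km by auto
  hence "L (i0, j0) \<subseteq> (\<Union>X\<in>S. L X)" using val unfolding valid_coloring_def by auto
  hence "c \<in> (\<Union>X\<in>S. L X)" using c by auto
  thus False unfolding S_def N_def by auto
qed

theorem mainTheorem5:
  fixes k :: nat
  assumes "even k" and "k \<ge> 2"
  shows "color_number (qvars k) (qhead k) (qbody k) (qfds k) \<le> 2"
  unfolding color_number_def
proof (rule Sup_least, clarify)
  fix L :: "nat \<times> nat \<Rightarrow> nat set"
  assume val: "valid_coloring (qvars k) (qfds k) L" and pos: "0 < body_max L (qbody k)"
  obtain m where km: "k = 2*m" using assms(1) by blast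
  have m1: "m \<ge> 1" using km assms(2) by simp
  have mdiv: "k div 2 = m" using km by simp
  define M where "M = body_max L (qbody k)"
  define R where "R i = (\<Union>j\<in>{1..m}. L (i, j))" for i
  define U where "U = (\<Union>X\<in>qvars k. L X)"
  have finL: "\<And>X. X \<in> qvars k \<Longrightarrow> finite (L X)" using val unfolding valid_coloring_def by auto
  have finU: "finite U" unfolding U_def qvars_def using finL qvars_def by auto
  have head: "colors_of L (qhead k) = card U"
  proof -
    have "set (qhead k) = qvars k" unfolding qhead_def qvars_def mdiv
      by (auto simp del: upt_Suc simp: atLeastLessThanSuc_atLeastAtMost)
    thus ?thesis unfolding colors_of_def U_def by simp
  qed
  have rowin: "[(i, j). j \<leftarrow> [1..<m + 1]] \<in> set (qbody k)" if "i \<in> {1..k}" for i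
    using that unfolding qbody_def mdiv by auto
  have setrow: "set [(i, j). j \<leftarrow> [1..<m + 1]] = {i} \<times> {1..m}" for i by auto
  have RM: "card (R i) \<le> M" if "i \<in> {1..k}" for i
  proof -
    have "card (R i) = colors_of L [(i, j). j \<leftarrow> [1..<m + 1]]"
      unfolding colors_of_def setrow R_def by (auto intro!: arg_cong[where f=card])
    also have "\<dots> \<le> M" unfolding M_def body_max_def
      using rowin[OF that] by (intro Max_ge) auto
    finally show ?thesis .
  qed
  have RU: "R i \<subseteq> U" if "i \<in> {1..k}" for i
    using that unfolding R_def U_def qvars_def mdiv by fastforce
  have cardR: "card (R i) = (\<Sum>c\<in>U. if c \<in> R i then 1 else 0)" if "i \<in> {1..k}" for i
  proof -
    have "(\<Sum>c\<in>U. if c \<in> R i then 1 else 0) = card (U \<inter> {c. c \<in> R i})"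
      by (simp add: sum.If_cases finU)
    also have "U \<inter> {c. c \<in> R i} = R i" using RU[OF that] by auto
    finally show ?thesis by simp
  qed
  have lowc: "m + 1 \<le> (\<Sum>i\<in>{1..k}. if c \<in> R i then 1 else 0)" if cU0: "c \<in> U" for c
  proof -
    obtain i0 j0 where ij: "i0 \<in> {1..k}" "j0 \<in> {1..m}" "c \<in> L (i0, j0)"
      using cU0 unfolding U_def qvars_def mdiv by auto
    have "m + 1 \<le> card {i\<in>{1..k}. c \<in> L (i, j0)}"
      using key_col[OF km val ij] .
    also have "\<dots> \<le> card {i\<in>{1..k}. c \<in> R i}"
      by (rule card_mono) (use ij(2) in \<open>auto simp: R_def\<close>)
    also have "\<dots> = (\<Sum>i\<in>{1..k}. if c \<in> R i then 1 else 0)"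
    proof -
      have "{i\<in>{1..k}. c \<in> R i} = {1..k} \<inter> {i. c \<in> R i}" by auto
      thus ?thesis by (simp add: sum.If_cases)
    qed
    finally show ?thesis .
  qed
  have "card U * (m + 1) = (\<Sum>c\<in>U. m + 1)" by simp
  also have "\<dots> \<le> (\<Sum>c\<in>U. \<Sum>i\<in>{1..k}. if c \<in> R i then 1 else 0)"
    by (rule sum_mono) (use lowc in auto)
  also have "\<dots> = (\<Sum>i\<in>{1..k}. \<Sum>c\<in>U. if c \<in> R i then 1 else 0)"
    by (rule sum.swap)
  also have "\<dots> = (\<Sum>i\<in>{1..k}. card (R i))" using cardR by simp
  also have "\<dots> \<le> (\<Sum>i\<in>{1..k}. M)" by (rule sum_mono) (use RM in auto)
  also have "\<dots> = 2 * m * M" using km by simp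
  finally have ineq: "card U * (m + 1) \<le> 2 * m * M" .
  have "2 * m * M \<le> 2 * M * (m + 1)" by simp
  hence "card U * (m + 1) \<le> (2 * M) * (m + 1)" using ineq by (simp add: mult.commute mult.left_commute)
  hence cU: "card U \<le> 2 * M" using mult_le_cancel2[of "card U" "m+1" "2*M"] by simp
  have Mpos: "real M > 0" using pos M_def by simp
  have "real (card U) / real M \<le> 2"
    using cU Mpos by (simp add: divide_le_eq)
  thus "ereal (real (colors_of L (qhead k)) / real (body_max L (qbody k))) \<le> 2"
    using head M_def by simp
qed

end
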